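(* For every real number $L>0$, $$\mathcal L\left(e^{-L}\right)=\sum_{k=2}^{\infty}\mathcal L\left(\frac{\sinh^2(L/2)}{\sinh^2(kL/2)}\right).$$
   Context: $\mathcal L$ denotes the Rogers dilogarithm: for real $z\le 1$, $\mathcal L(z)=\mathrm{Li}_2(z)+\tfrac12\log|z|\log(1-z)$ (with $\mathcal L(0)=0$, $\mathcal L(1)=\pi^2/6$), where $\mathrm{Li}_2(z)=\sum_{m\ge1}z^m/m^2=-\int_0^z\frac{\log(1-t)}{t}\,dt$. *)

theory Defs
  imports "HOL-Analysis.Analysis"
begin

text \<open>Dilogarithm for real z \<le> 1: Li2 z = - integral from 0 to z of log(1-t)/t dt
  (oriented integral; the integrand at t = 0 is irrelevant, measure zero).\<close>
definition Li2 :: "real \<Rightarrow> real" where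
  "Li2 z = (if 0 \<le> z then - integral {0..z} (\<lambda>t. ln (1 - t) / t)
            else integral {z..0} (\<lambda>t. ln (1 - t) / t))"

definition Rogers_L :: "real \<Rightarrow> real" where
  "Rogers_L z = (if z = 0 then 0 else if z = 1 then pi\<^sup>2 / 6
                 else Li2 z + 1/2 * ln \<bar>z\<bar> * ln (1 - z))"

end

theory Submission imports Defs begin

definition gg :: "real \<Rightarrow> real" where
  "gg t = (if t = 0 then -1 else ln (1 - t) / t)"

definition Lr :: "real \<Rightarrow> real" where
  "Lr x = - integral {0..x} gg + 1/2 * (ln x * ln (1 - x))"

lemma gg_cont: assumes "b < 1" shows "continuous_on {0..b} gg"
proof -
  have d: "((\<lambda>t::real. ln (1 - t)) has_real_derivative -1) (at 0)"
    by (auto intro!: derivative_eq_intros)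
  have lim: "((\<lambda>t::real. ln (1 - t) / t) \<longlongrightarrow> -1) (at 0)"
    by (rule Lim_transform_eventually[OF DERIV_D[OF d]]) simp
  have "isCont gg t" if "t \<in> {0..b}" for t
  proof (cases "t = 0")
    case True
    have "(gg \<longlongrightarrow> -1) (at 0)"
      using lim by (rule Lim_transform_eventually) (auto simp: gg_def eventually_at_filter)
    then show ?thesis using True by (simp add: isCont_def gg_def)
  next
    case False
    have cont: "isCont (\<lambda>t. ln (1 - t) / t) t" using that False assms
      by (intro continuous_intros) auto
    have ev: "eventually (\<lambda>s. ln (1 - s) / s = gg s) (nhds t)"
      using eventually_nhds_in_open[of "-{0}" t] False
      by (auto elim!: eventually_mono simp: gg_def)
    show ?thesis using isCont_cong[OF ev] cont by simp
  qed
  then show ?thesis by (simp add: continuous_at_imp_continuous_on)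
qed

lemma Rogers_eq: assumes "0 < x" "x < 1" shows "Rogers_L x = Lr x"
proof -
  have "integral {0..x} (\<lambda>t. ln (1 - t) / t) = integral {0..x} gg"
    by (rule integral_spike[of "{0}"]) (auto simp: gg_def)
  then show ?thesis using assms by (simp add: Rogers_L_def Li2_def Lr_def)
qed

definition DL :: "real \<Rightarrow> real" where
  "DL z = -1/2 * (ln (1 - z) / z + ln z / (1 - z))"

lemma Lr_deriv: assumes "0 < x" "x < 1" shows "(Lr has_real_derivative DL x) (at x)"
proof -
  define b where "b = (1 + x) / 2"
  have b: "x < b" "b < 1" using assms by (auto simp: b_def)
  have "((\<lambda>u. integral {0..u} gg) has_real_derivative gg x) (at x within {0..b})"
    using integral_has_real_derivative[OF gg_cont[OF b(2)]] assms b by auto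
  then have "((\<lambda>u. integral {0..u} gg) has_real_derivative gg x) (at x within {0<..<b})"
    by (rule DERIV_subset) auto
  moreover have "at x within {0<..<b} = at x"
    using assms b by (intro at_within_open) auto
  ultimately have I: "((\<lambda>u. integral {0..u} gg) has_real_derivative gg x) (at x)"
    by simp
  have a: "(ln has_real_derivative 1/x) (at x)" by (rule DERIV_ln_divide) (use assms in simp)
  have b0: "((\<lambda>z. 1 - z) has_real_derivative -1) (at x)"
    by (rule DERIV_cong[OF DERIV_diff[OF DERIV_const DERIV_ident]]) simp
  have b: "((\<lambda>z. ln (1 - z)) has_real_derivative 1/(1-x) * -1) (at x)"
    by (rule DERIV_chain2[OF DERIV_ln_divide b0]) (use assms in simp)
  have c: "((\<lambda>z. ln z * ln (1-z)) has_real_derivative 1/x * ln(1-x) + 1/(1-x) * -1 * ln x) (at x)"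
    using DERIV_mult[OF a b] .
  have "(Lr has_real_derivative (- gg x + 1/2 * (1/x * ln(1-x) + 1/(1-x) * -1 * ln x))) (at x)"
    unfolding Lr_def[abs_def] by (rule DERIV_add[OF DERIV_minus[OF I] DERIV_cmult[OF c]])
  moreover have "- gg x + 1/2 * (1/x * ln(1-x) + 1/(1-x) * -1 * ln x) = DL x"
    using assms by (simp add: gg_def DL_def field_simps)
  ultimately show ?thesis by (rule DERIV_cong)
qed

lemma Lr_isCont: assumes "0 < x" "x < 1" shows "isCont Lr x"
  using Lr_deriv[OF assms] DERIV_isCont by blast

lemma Lr_lim0: "(Lr \<longlongrightarrow> 0) (at_right 0)"
proof -
  have "continuous_on {0..1/2} (\<lambda>u. integral {0..u} gg)"
    by (rule indefinite_integral_continuous_1) (auto intro!: integrable_continuous_real gg_cont)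
  then have "((\<lambda>u. integral {0..u} gg) \<longlongrightarrow> integral {0..0} gg) (at 0 within {0..1/2})"
    unfolding continuous_on_def by (rule bspec) simp
  then have A: "((\<lambda>u. integral {0..u} gg) \<longlongrightarrow> 0) (at_right 0)"
    by (simp add: at_within_Icc_at_right)
  have d: "((\<lambda>t::real. ln (1 - t)) has_real_derivative -1) (at 0)"
    by (auto intro!: derivative_eq_intros)
  have "((\<lambda>t::real. ln (1 - t) / t) \<longlongrightarrow> -1) (at 0)"
    by (rule Lim_transform_eventually[OF DERIV_D[OF d]]) simp
  then have l1: "((\<lambda>t::real. ln (1 - t) / t) \<longlongrightarrow> -1) (at_right 0)"
    by (simp add: filterlim_at_split)
  have "((\<lambda>x. ln (inverse x) / inverse x) \<longlongrightarrow> 0) (at_right (0::real))"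
    by (rule filterlim_compose[OF ln_x_over_x_tendsto_0 filterlim_inverse_at_top_right])
  then have l2: "((\<lambda>x. - (x * ln x)) \<longlongrightarrow> 0) (at_right (0::real))"
    by (rule Lim_transform_eventually)
       (auto simp: eventually_at_right_less ln_inverse ln_div field_simps intro!: eventually_mono[OF eventually_at_right_less])
  have "((\<lambda>x. - (- (x * ln x)) * (ln (1 - x) / x)) \<longlongrightarrow> - 0 * -1) (at_right (0::real))"
    by (intro tendsto_intros l1 l2)
  then have "((\<lambda>x. - (- (x * ln x)) * (ln (1 - x) / x)) \<longlongrightarrow> 0) (at_right (0::real))"
    by simp
  then have B: "((\<lambda>x::real. ln x * ln (1 - x)) \<longlongrightarrow> 0) (at_right 0)"
    by (rule Lim_transform_eventually)
       (auto intro!: eventually_mono[OF eventually_at_right_less])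
  have "((\<lambda>x. - integral {0..x} gg + 1/2 * (ln x * ln (1 - x))) \<longlongrightarrow> - 0 + 1/2 * 0) (at_right 0)"
    by (intro tendsto_intros A B)
  then show ?thesis by (simp add: Lr_def[abs_def])
qed

lemma Lr_comp0:
  assumes "(h \<longlongrightarrow> 0) F" "eventually (\<lambda>x. 0 < h x) F"
  shows "((\<lambda>x. Lr (h x)) \<longlongrightarrow> 0) F"
  using filterlim_compose[OF Lr_lim0 tendsto_imp_filterlim_at_right[OF assms]] by simp

lemma Lr_chain:
  assumes "(h has_real_derivative h') (at x)" "0 < h x" "h x < 1"
  shows "((\<lambda>x. Lr (h x)) has_real_derivative DL (h x) * h') (at x)"
  by (rule DERIV_chain2[OF Lr_deriv[OF assms(2,3)] assms(1)])

lemma reflection: "\<exists>C. \<forall>x\<in>{0<..<1}. Lr x + Lr (1 - x) = C"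
proof (rule has_field_derivative_zero_constant)
  show "convex {0<..<1::real}" by simp
  fix x :: real assume x: "x \<in> {0<..<1}"
  have d1: "((\<lambda>z. 1 - z) has_real_derivative -1) (at x)"
    by (rule DERIV_cong[OF DERIV_diff[OF DERIV_const DERIV_ident]]) simp
  have e1: "(Lr has_real_derivative DL x) (at x)" using x by (intro Lr_deriv) auto
  have e2: "((\<lambda>x. Lr (1 - x)) has_real_derivative DL (1 - x) * -1) (at x)"
    using x by (intro Lr_chain[OF d1]) auto
  have "((\<lambda>x. Lr x + Lr (1 - x)) has_real_derivative DL x + DL (1 - x) * -1) (at x)"
    by (rule DERIV_add[OF e1 e2])
  moreover have "DL x + DL (1 - x) * -1 = 0" by (simp add: DL_def)
  ultimately have "((\<lambda>x. Lr x + Lr (1 - x)) has_real_derivative 0) (at x)" by simp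
  then show "((\<lambda>x. Lr x + Lr (1 - x)) has_real_derivative 0) (at x within {0<..<1})"
    by (rule has_field_derivative_at_within)
qed

lemma alg_t3:
  fixes x Q D P c e a d :: real
  assumes "x \<noteq> 0" "Q \<noteq> 0" "D \<noteq> 0" "P \<noteq> 0"
  shows "(-1/2*((c-e)/(x*Q/D) + (a+d-e)/(P/D))) * (Q/D^2) = -1/2*((c-e)/(x*D) + (a+d-e)*Q/(P*D))"
  using assms by (simp add: field_simps power2_eq_square)

lemma alg_t4:
  fixes y Q D P b c e d :: real
  assumes "y \<noteq> 0" "Q \<noteq> 0" "D \<noteq> 0" "P \<noteq> 0"
  shows "(-1/2*((d-e)/(y*P/D) + (b+c-e)/(Q/D))) * (y*(-Q)/D^2) = -1/2*((d-e)*(-Q)/(P*D) - (b+c-e)*y/D)"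
  using assms by (simp add: field_simps power2_eq_square)

lemma alg_fin:
  fixes x y D P Q a b c d e :: real
  assumes "x \<noteq> 0" "y \<noteq> 0" "D \<noteq> 0" "P \<noteq> 0" "D = 1 - x*y" "P = 1 - x" "Q = 1 - y"
  shows "-1/2*(c/x + a/P) - (-1/2*(e/(x*y) + (a+b)/D)) * y
     - (-1/2*((c-e)/(x*D) + (a+d-e)*Q/(P*D)))
     - (-1/2*((d-e)*(-Q)/(P*D) - (b+c-e)*y/D)) = 0"
proof -
  have "-1/2*(c/x + a/P) - (-1/2*(e/(x*y) + (a+b)/D)) * y
     - (-1/2*((c-e)/(x*D) + (a+d-e)*Q/(P*D)))
     - (-1/2*((d-e)*(-Q)/(P*D) - (b+c-e)*y/D))
     = (-(c*P*D + a*x*D) + (e*P*D + (a+b)*x*P*y) + ((c-e)*P + (a+d-e)*Q*x) + (-(d-e)*Q*x - (b+c-e)*y*x*P)) / (2*x*P*D)"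
    using assms(1-4) by (simp add: field_simps)
  also have "\<dots> = 0"
  proof -
    have "(-(c*P*D + a*x*D) + (e*P*D + (a+b)*x*P*y) + ((c-e)*P + (a+d-e)*Q*x) + (-(d-e)*Q*x - (b+c-e)*y*x*P)) = 0"
      unfolding assms(5-7) by algebra
    then show ?thesis by simp
  qed
  finally show ?thesis .
qed

lemma alg5:
  fixes x y a b c d e :: real
  assumes "0 < x" "x < 1" "0 < y" "y < 1"
  shows "-1/2*(c/x + a/(1-x))
     - (-1/2*(e/(x*y) + (a+b)/(1-x*y))) * y
     - (-1/2*((c-e)/(x*(1-y)/(1-x*y)) + (a+d-e)/(1 - x*(1-y)/(1-x*y)))) * ((1-y)/(1-x*y)^2)
     - (-1/2*((d-e)/(y*(1-x)/(1-x*y)) + (b+c-e)/(1 - y*(1-x)/(1-x*y)))) * (y*(y-1)/(1-x*y)^2) = 0"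
proof -
  have "x*y < 1*1" by (rule mult_strict_mono) (use assms in auto)
  then have h: "1 - x*y \<noteq> 0" "x \<noteq> 0" "y \<noteq> 0" "1 - x \<noteq> 0" "1 - y \<noteq> 0" using assms by auto
  have e1: "1 - x*(1-y)/(1-x*y) = (1-x)/(1-x*y)" using h by (simp add: field_simps)
  have e2: "1 - y*(1-x)/(1-x*y) = (1-y)/(1-x*y)" using h by (simp add: field_simps)
  have t3: "(-1/2*((c-e)/(x*(1-y)/(1-x*y)) + (a+d-e)/((1-x)/(1-x*y)))) * ((1-y)/(1-x*y)^2)
     = -1/2*((c-e)/(x*(1-x*y)) + (a+d-e)*(1-y)/((1-x)*(1-x*y)))"
    by (rule alg_t3) (use h in auto)
  have t4: "(-1/2*((d-e)/(y*(1-x)/(1-x*y)) + (b+c-e)/((1-y)/(1-x*y)))) * (y*(y-1)/(1-x*y)^2)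
     = -1/2*((d-e)*(-(1-y))/((1-x)*(1-x*y)) - (b+c-e)*y/(1-x*y))"
  proof -
    have "y*(y-1) = y*(-(1-y))" by simp
    then show ?thesis using alg_t4[of y "1-y" "1-x*y" "1-x" d e b c] h by simp
  qed
  have fin: "-1/2*(c/x + a/(1-x)) - (-1/2*(e/(x*y) + (a+b)/(1-x*y))) * y
     - (-1/2*((c-e)/(x*(1-x*y)) + (a+d-e)*(1-y)/((1-x)*(1-x*y))))
     - (-1/2*((d-e)*(-(1-y))/((1-x)*(1-x*y)) - (b+c-e)*y/(1-x*y))) = 0"
    by (rule alg_fin) (use h in auto)
  show ?thesis unfolding e1 e2 t3 t4 using fin .
qed

lemma rng5:
  fixes x y :: real
  assumes "0 < x" "x < 1" "0 < y" "y < 1"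
  shows "0 < x*y" "x*y < 1" "0 < x*(1-y)/(1-x*y)" "x*(1-y)/(1-x*y) < 1"
        "0 < y*(1-x)/(1-x*y)" "y*(1-x)/(1-x*y) < 1"
proof -
  have xy: "x*y < 1*1" by (rule mult_strict_mono) (use assms in auto)
  show "0 < x*y" "x*y < 1" using xy assms by auto
  show "0 < x*(1-y)/(1-x*y)" "0 < y*(1-x)/(1-x*y)" using xy assms by auto
  show "x*(1-y)/(1-x*y) < 1" using xy assms by (simp add: divide_less_eq algebra_simps)
  show "y*(1-x)/(1-x*y) < 1" using xy assms by (simp add: divide_less_eq algebra_simps)
qed

lemma five_term:
  fixes x y :: real
  assumes x: "0 < x" "x < 1" and y: "0 < y" "y < 1"
  shows "Lr x + Lr y = Lr (x*y) + Lr (x*(1-y)/(1-x*y)) + Lr (y*(1-x)/(1-x*y))"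
proof -
  define F where "F = (\<lambda>x. Lr x + Lr y - Lr (x*y) - Lr (x*(1-y)/(1-x*y)) - Lr (y*(1-x)/(1-x*y)))"
  have "\<exists>c. \<forall>x\<in>{0<..<1}. F x = c"
  proof (rule has_field_derivative_zero_constant)
    show "convex {0<..<1::real}" by simp
    fix x :: real assume xx: "x \<in> {0<..<1}"
    then have x0: "0 < x" "x < 1" by auto
    note r = rng5[OF x0 y]
    have nz: "1 - x*y \<noteq> 0" "x*y \<noteq> 1" using r by auto
    have dXY: "((\<lambda>x. x*y) has_real_derivative y) (at x)"
      by (auto intro!: derivative_eq_intros)
    have dA: "((\<lambda>x. x*(1-y)/(1-x*y)) has_real_derivative (1-y)/(1-x*y)^2) (at x)"
      using nz by (auto intro!: derivative_eq_intros simp: field_simps power2_eq_square)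
    have dB: "((\<lambda>x. y*(1-x)/(1-x*y)) has_real_derivative y*(y-1)/(1-x*y)^2) (at x)"
      using nz by (auto intro!: derivative_eq_intros simp: field_simps power2_eq_square)
    have d1: "(Lr has_real_derivative DL x) (at x)" using x0 by (rule Lr_deriv)
    have d2: "((\<lambda>x. Lr (x*y)) has_real_derivative DL (x*y) * y) (at x)"
      using r by (intro Lr_chain[OF dXY]) auto
    have d3: "((\<lambda>x. Lr (x*(1-y)/(1-x*y))) has_real_derivative DL (x*(1-y)/(1-x*y)) * ((1-y)/(1-x*y)^2)) (at x)"
      using r by (intro Lr_chain[OF dA]) auto
    have d4: "((\<lambda>x. Lr (y*(1-x)/(1-x*y))) has_real_derivative DL (y*(1-x)/(1-x*y)) * (y*(y-1)/(1-x*y)^2)) (at x)"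
      using r by (intro Lr_chain[OF dB]) auto
    have dF: "(F has_real_derivative DL x + 0 - DL (x*y) * y - DL (x*(1-y)/(1-x*y)) * ((1-y)/(1-x*y)^2)
               - DL (y*(1-x)/(1-x*y)) * (y*(y-1)/(1-x*y)^2)) (at x)"
      unfolding F_def by (rule DERIV_diff[OF DERIV_diff[OF DERIV_diff[OF DERIV_add[OF d1 DERIV_const] d2] d3] d4])
    have pos: "0 < 1 - x" "0 < 1 - y" "0 < 1 - x*y" using r x0 y by auto
    have l1: "ln (1 - x*(1-y)/(1-x*y)) = ln (1-x) - ln (1-x*y)"
    proof -
      have "1 - x*(1-y)/(1-x*y) = (1-x)/(1-x*y)" using nz by (simp add: field_simps)
      then show ?thesis using pos by (simp add: ln_div)
    qed
    have l2: "ln (x*(1-y)/(1-x*y)) = ln x + ln (1-y) - ln (1-x*y)"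
      using pos x0 by (simp add: ln_div ln_mult)
    have l3: "ln (1 - y*(1-x)/(1-x*y)) = ln (1-y) - ln (1-x*y)"
    proof -
      have "1 - y*(1-x)/(1-x*y) = (1-y)/(1-x*y)" using nz by (simp add: field_simps)
      then show ?thesis using pos by (simp add: ln_div)
    qed
    have l4: "ln (y*(1-x)/(1-x*y)) = ln y + ln (1-x) - ln (1-x*y)"
      using pos y by (simp add: ln_div ln_mult)
    have l5: "ln (x*y) = ln x + ln y" using x0 y by (simp add: ln_mult)
    have "DL x + 0 - DL (x*y) * y - DL (x*(1-y)/(1-x*y)) * ((1-y)/(1-x*y)^2)
               - DL (y*(1-x)/(1-x*y)) * (y*(y-1)/(1-x*y)^2) = 0"
      unfolding DL_def l1 l2 l3 l4 l5
      using alg5[OF x0 y, where a="ln x" and b="ln y" and c="ln (1-x)" and d="ln (1-y)" and e="ln (1-x*y)"] by simp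
    with dF have "(F has_real_derivative 0) (at x)" by simp
    then show "(F has_real_derivative 0) (at x within {0<..<1})"
      by (rule has_field_derivative_at_within)
  qed
  then obtain c where c: "\<And>x. x \<in> {0<..<1} \<Longrightarrow> F x = c" by blast
  have ev01: "eventually (\<lambda>x. 0 < x \<and> x < (1::real)) (at_right 0)"
    using eventually_at_right_less[of "0::real"] order_tendstoD(2)[OF tendsto_ident_at[of "0::real" "{0<..}"], of 1]
    by (auto elim: eventually_elim2)
  have evc: "eventually (\<lambda>x. c = F x) (at_right 0)"
    using ev01 by (rule eventually_mono) (auto intro: c[symmetric])
  have limc: "(F \<longlongrightarrow> c) (at_right 0)"
    by (rule Lim_transform_eventually[OF tendsto_const evc])
  have L2: "((\<lambda>x. Lr (x*y)) \<longlongrightarrow> 0) (at_right 0)"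
  proof (rule Lr_comp0)
    show "((\<lambda>x. x*y) \<longlongrightarrow> 0) (at_right 0)"
      using tendsto_mult[OF tendsto_ident_at[of "0::real" "{0<..}"] tendsto_const[of y]] by simp
    show "eventually (\<lambda>x. 0 < x*y) (at_right 0)"
      using ev01 by (rule eventually_mono) (use y in auto)
  qed
  have L3: "((\<lambda>x. Lr (x*(1-y)/(1-x*y))) \<longlongrightarrow> 0) (at_right 0)"
  proof (rule Lr_comp0)
    have "((\<lambda>x. x*(1-y)/(1-x*y)) \<longlongrightarrow> 0*(1-y)/(1-0*y)) (at_right (0::real))"
      by (intro tendsto_intros) auto
    then show "((\<lambda>x. x*(1-y)/(1-x*y)) \<longlongrightarrow> 0) (at_right 0)" by simp
    show "eventually (\<lambda>x. 0 < x*(1-y)/(1-x*y)) (at_right 0)"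
      using ev01 by (rule eventually_mono) (use rng5 y in blast)
  qed
  have L4: "((\<lambda>x. Lr (y*(1-x)/(1-x*y))) \<longlongrightarrow> Lr y) (at_right 0)"
  proof (rule isCont_tendsto_compose[OF Lr_isCont[OF y]])
    have "((\<lambda>x. y*(1-x)/(1-x*y)) \<longlongrightarrow> y*(1-0)/(1-0*y)) (at_right (0::real))"
      by (intro tendsto_intros) auto
    then show "((\<lambda>x. y*(1-x)/(1-x*y)) \<longlongrightarrow> y) (at_right 0)" by simp
  qed
  have "(F \<longlongrightarrow> 0 + Lr y - 0 - 0 - Lr y) (at_right 0)"
    unfolding F_def by (intro tendsto_diff tendsto_add Lr_lim0 tendsto_const L2 L3 L4)
  then have "(F \<longlongrightarrow> 0) (at_right 0)" by simp
  then have "c = 0" using limc tendsto_unique[OF trivial_limit_at_right_real] by blast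
  then have "F x = 0" using c x by auto
  then show ?thesis unfolding F_def by simp
qed

lemma hlp1:
  fixes A B c k a :: real
  assumes "a \<noteq> 0" "B \<noteq> 0" "c \<noteq> 0" "k \<noteq> 0"
  shows "A/B * (c/(a*B)) / (c*k/(a*B^2)) = A/k"
  using assms by (simp add: field_simps power2_eq_square)

lemma hlp2:
  fixes A B c k a b :: real
  assumes "a \<noteq> 0" "B \<noteq> 0" "c \<noteq> 0" "k \<noteq> 0"
  shows "b/a*A/B * (c/B) / (c*k/(a*B^2)) = (a*b)/a*A/k"
  using assms by (simp add: field_simps power2_eq_square)

lemma alg_ab:
  fixes a b :: real
  assumes "0 < b" "b < a" "a < 1"
  shows "0 < (1-a)/(1-b)" "(1-a)/(1-b) < 1" "0 < b/a*(1-a)/(1-b)" "b/a*(1-a)/(1-b) < 1"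
    "(1-a)/(1-b) * (b/a*(1-a)/(1-b)) = ((1-a)^2/(4*a)) / ((1-b)^2/(4*b))"
    "(1-a)/(1-b) * (1 - b/a*(1-a)/(1-b)) / (1 - (1-a)/(1-b) * (b/a*(1-a)/(1-b))) = (1-a)/(1-a*b)"
    "b/a*(1-a)/(1-b) * (1 - (1-a)/(1-b)) / (1 - (1-a)/(1-b) * (b/a*(1-a)/(1-b))) = (a*b)/a*(1-a)/(1-a*b)"
proof -
  have h: "0 < 1 - a" "0 < 1 - b" "0 < a - b" "0 < a" "0 < 1 - a*b"
    using assms mult_strict_mono[of a 1 b 1] by auto
  show "0 < (1-a)/(1-b)" "0 < b/a*(1-a)/(1-b)" using h assms by auto
  show "(1-a)/(1-b) < 1" using h assms by (simp add: divide_less_eq)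
  show "b/a*(1-a)/(1-b) < 1" using h assms by (simp add: divide_less_eq field_simps)
  show "(1-a)/(1-b) * (b/a*(1-a)/(1-b)) = ((1-a)^2/(4*a)) / ((1-b)^2/(4*b))"
  proof -
    have n: "1 - b \<noteq> 0" "a \<noteq> 0" "b \<noteq> 0" "(1-b)^2 \<noteq> 0" using h assms by auto
    have "(1-a)/(1-b) * (b/a*(1-a)/(1-b)) = b*(1-a)^2/(a*(1-b)^2)"
      using n by (simp add: power2_eq_square mult_ac)
    also have "\<dots> = ((1-a)^2/(4*a)) / ((1-b)^2/(4*b))"
      using n by (simp add: divide_simps)
    finally show ?thesis .
  qed
  have e1: "1 - b/a*(1-a)/(1-b) = (a - b)/(a*(1-b))" using h by (simp add: field_simps)
  have e2: "1 - (1-a)/(1-b) = (a - b)/(1-b)" using h by (simp add: field_simps)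
  have e3: "1 - (1-a)/(1-b) * (b/a*(1-a)/(1-b)) = (a-b)*(1-a*b)/(a*(1-b)^2)"
  proof -
    have n: "a*(1-b)^2 \<noteq> 0" using h by auto
    have xy: "(1-a)/(1-b) * (b/a*(1-a)/(1-b)) = b*(1-a)^2/(a*(1-b)^2)"
      using h by (simp add: power2_eq_square mult_ac)
    have "1 - b*(1-a)^2/(a*(1-b)^2) = (a*(1-b)^2 - b*(1-a)^2)/(a*(1-b)^2)"
      using n by (simp add: diff_divide_distrib)
    also have "a*(1-b)^2 - b*(1-a)^2 = (a-b)*(1-a*b)" by algebra
    finally show ?thesis unfolding xy .
  qed
  show "(1-a)/(1-b) * (1 - b/a*(1-a)/(1-b)) / (1 - (1-a)/(1-b) * (b/a*(1-a)/(1-b))) = (1-a)/(1-a*b)"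
    unfolding e1 e3 by (rule hlp1) (use h in auto)
  show "b/a*(1-a)/(1-b) * (1 - (1-a)/(1-b)) / (1 - (1-a)/(1-b) * (b/a*(1-a)/(1-b))) = (a*b)/a*(1-a)/(1-a*b)"
    unfolding e2 e3 by (rule hlp2) (use h in auto)
qed

lemma sq_half: "0 < (z::real) \<Longrightarrow> ((1/z - z)/2)^2 = (1-z^2)^2/(4*z^2)"
  by (simp add: field_simps power2_eq_square)

lemma sinh_nat: "sinh (real n * L / 2) = (1/(exp(-L/2))^n - (exp(-L/2))^n)/2"
proof -
  have "exp (real n * L / 2) = exp (L/2) ^ n"
    using exp_of_nat_mult[of n "L/2"] by simp
  also have "\<dots> = 1/(exp(-L/2))^n"
  proof -
    have "exp (L/2) * exp (-L/2) = 1" by (simp flip: exp_add)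
    then have i: "exp (L/2) = 1/exp(-L/2)" by (simp add: eq_divide_eq)
    show ?thesis unfolding i by (rule power_one_over)
  qed
  finally have e1: "exp (real n * L / 2) = 1/(exp(-L/2))^n" .
  have e2: "exp (-(real n * L / 2)) = (exp(-L/2))^n"
    using exp_of_nat_mult[of n "-L/2"] by simp
  show ?thesis unfolding sinh_def e1 e2 by simp
qed

theorem theorem1:
  fixes L :: real
  assumes "L > 0"
  shows "(\<lambda>k. Rogers_L ((sinh (L/2))\<^sup>2 / (sinh (real (k + 2) * L / 2))\<^sup>2))
           sums Rogers_L (exp (-L))"
proof -
  define r where "r = exp (-L/2)"
  have r: "0 < r" "r < 1" using assms by (auto simp: r_def)
  define a where "a = r^2"
  have a: "0 < a" "a < 1" using r by (auto simp: a_def power_less_one_iff)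
  have ra: "(r^n)^2 = a^n" for n by (simp add: a_def power_mult[symmetric] mult.commute)
  have an: "0 < a^n \<and> a^n < a" if "n \<ge> 2" for n
  proof -
    have "a^n < a^1" using a that by (intro power_strict_decreasing) auto
    then show ?thesis using a by simp
  qed
  define P where "P n = (1-a)/(1-a^n)" for n :: nat
  define Q where "Q n = a^n/a*(1-a)/(1-a^n)" for n :: nat
  define f where "f k = Lr (P (k+2)) + Lr (Q (k+2))" for k
  have s1: "sinh (L/2) = (1/r - r)/2" using sinh_nat[of 1 L] by (simp add: r_def)
  have sh1: "(sinh (L/2))^2 = (1-a)^2/(4*a)"
    unfolding s1 sq_half[OF r(1)] a_def by (rule refl)
  have hterm: "Rogers_L ((sinh (L/2))\<^sup>2 / (sinh (real (k + 2) * L / 2))\<^sup>2) = f k - f (Suc k)" for k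
  proof -
    define n where "n = k + 2"
    have nn: "n \<ge> 2" by (simp add: n_def)
    note ab = alg_ab[of "a^n" a, OF an[OF nn, THEN conjunct1] an[OF nn, THEN conjunct2] a(2)]
    have sn: "sinh (real n * L / 2) = (1/r^n - r^n)/2" using sinh_nat[of n L] by (simp add: r_def)
    have shn: "(sinh (real n * L / 2))^2 = (1-a^n)^2/(4*a^n)"
      unfolding sn sq_half[of "r^n", OF zero_less_power[OF r(1)]] ra by (rule refl)
    have u: "(sinh (L/2))\<^sup>2 / (sinh (real (k + 2) * L / 2))\<^sup>2 = P n * Q n"
      unfolding n_def[symmetric] sh1 shn P_def Q_def using ab(5) by simp
    have Pn: "0 < P n" "P n < 1" "0 < Q n" "Q n < 1" using ab(1-4) by (simp_all add: P_def Q_def)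
    have uu: "0 < P n * Q n" "P n * Q n < 1"
      using Pn mult_strict_mono[of "P n" 1 "Q n" 1] by auto
    have ft: "Lr (P n) + Lr (Q n) = Lr (P n * Q n) + Lr (P n * (1 - Q n) / (1 - P n * Q n))
              + Lr (Q n * (1 - P n) / (1 - P n * Q n))"
      by (rule five_term) (use Pn in auto)
    have e6: "P n * (1 - Q n) / (1 - P n * Q n) = P (Suc n)"
      using ab(6) by (simp add: P_def Q_def)
    have e7: "Q n * (1 - P n) / (1 - P n * Q n) = Q (Suc n)"
      using ab(7) by (simp add: P_def Q_def mult.assoc)
    have "Rogers_L (P n * Q n) = Lr (P n * Q n)" using uu by (rule Rogers_eq)
    then show ?thesis unfolding u using ft e6 e7 by (simp add: f_def n_def)
  qed
  have lim_an: "(\<lambda>k. a^(k+2)) \<longlonglongrightarrow> 0"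
    using LIMSEQ_ignore_initial_segment[OF LIMSEQ_power_zero[of a], of 2] a by simp
  have limP: "(\<lambda>k. Lr (P (k+2))) \<longlonglongrightarrow> Lr (1-a)"
  proof (rule isCont_tendsto_compose[OF Lr_isCont])
    show "0 < 1 - a" "1 - a < 1" using a by auto
    have "(\<lambda>k. (1-a)/(1-a^(k+2))) \<longlonglongrightarrow> (1-a)/(1-0)"
      by (intro tendsto_intros lim_an) auto
    then show "(\<lambda>k. P (k+2)) \<longlonglongrightarrow> 1 - a" by (simp add: P_def)
  qed
  have limQ: "(\<lambda>k. Lr (Q (k+2))) \<longlonglongrightarrow> 0"
  proof (rule Lr_comp0)
    have "(\<lambda>k. a^(k+2)/a*(1-a)/(1-a^(k+2))) \<longlonglongrightarrow> 0/a*(1-a)/(1-0)"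
      using a by (intro tendsto_intros lim_an) auto
    then show "(\<lambda>k. Q (k+2)) \<longlonglongrightarrow> 0" by (simp add: Q_def)
    show "eventually (\<lambda>k. 0 < Q (k+2)) sequentially"
    proof (rule always_eventually, rule allI)
      fix k :: nat
      have h: "0 < a^(k+2)" "a^(k+2) < a" using an[of "k+2"] by auto
      then have h2: "0 < 1 - a^(k+2)" using a by linarith
      show "0 < Q (k+2)" unfolding Q_def using h h2 a
        by (intro divide_pos_pos mult_pos_pos) auto
    qed
  qed
  have "f \<longlonglongrightarrow> Lr (1-a) + 0" unfolding f_def[abs_def] by (intro tendsto_add limP limQ)
  then have tel: "(\<lambda>k. f k - f (Suc k)) sums (f 0 - Lr (1-a))"
    by (intro telescope_sums') simp
  obtain C where C: "\<And>x. x \<in> {0<..<1} \<Longrightarrow> Lr x + Lr (1 - x) = C" using reflection by blast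
  have P2: "0 < P 2" "P 2 < 1" and Q2: "Q 2 = 1 - P 2"
  proof -
    have "1 - a^2 \<noteq> 0" "0 < 1 - a^2" using a an[of 2] by auto
    then show "Q 2 = 1 - P 2" using a by (simp add: P_def Q_def field_simps power2_eq_square)
    show "0 < P 2" "P 2 < 1" using alg_ab(1,2)[of "a^2" a] an[of 2] a by (simp_all add: P_def)
  qed
  have "f 0 = Lr (P 2) + Lr (Q 2)" unfolding f_def by (simp only: add_0)
  then have f0: "f 0 = C" using C[of "P 2"] P2 Q2 by simp
  have "Lr (1-a) + Lr (1 - (1-a)) = C" using a by (intro C) auto
  then have val: "f 0 - Lr (1-a) = Lr a" using f0 by simp
  have ea: "a = exp (-L)" unfolding a_def r_def by (simp add: power2_eq_square exp_add[symmetric])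
  have "Rogers_L (exp (-L)) = Lr a" using a by (simp add: ea Rogers_eq)
  then show ?thesis using tel unfolding hterm val by simp
qed

end
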